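(* Let $S$ be a sticky tree with $n+1$ nodes ($n\ge1$), let $v_1,\dots,v_n$ be its non-root nodes listed in prefix order, and let $c$ be its certificate-counting function. Let $\mathrm{E}(S)$ be the contour word of $S$ and $\mathrm{D}(S)=u\,d^{c(v_1)}\,u\,d^{c(v_2)}\cdots u\,d^{c(v_n)}$. Then $\mathrm{D}(S)$ and $\mathrm{E}(S)$ are Dyck paths of length $2n$ and $\mathrm{D}(S)\preceq_T \mathrm{E}(S)$, i.e. $[\mathrm{D}(S),\mathrm{E}(S)]$ is an interval of the Tamari lattice of order $n$.
   Context: Sticky trees: a plane tree is a rooted tree in which the children of every node are linearly ordered (left to right). The root has depth $0$, a child of a node of depth $d$ has depth $d+1$. The prefix order is: the root, followed by the prefix order of the subtree of its leftmost child, then of its second child, and so on. $S_u$ denotes the subtree rooted at $u$. A sticky tree is a plane tree $S$ with node set $V$ and a labeling $\ell:V\to\mathbb{N}$ such that: (1) every node $u$ of depth $d$ has $0\le\ell(u)\le d$; (2) every node $u$ of depth $d>0$ has some $v\in S_u$ (possibly $v=u$) with $\ell(v)<d$; (3) for every node $u$ of depth $d$, if some $v\in S_u$ has $\ell(v)=d$, then every node of $S_u$ (including $u$) preceding $v$ in prefix order has label at least $d$. The certificate of a non-root node $u$ of depth $d$ is the first node, in prefix order, of $S_u$ whose label is $<d$. The certificate-counting function $c:V\to\mathbb{N}$ assigns to each node $w$ the number of non-root nodes whose certificate is $w$. Contour word: $\mathrm{E}(S)$ is the word in $\{u,d\}$ obtained by the depth-first traversal of $S$ starting at the root and visiting children from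 left to right, writing $u$ each time one moves from a node to a child and $d$ each time one moves back from a child to its parent. Dyck paths and Tamari lattice: a Dyck path of length $2n$ is a word in $\{u,d\}$ with $n$ letters $u$ and $n$ letters $d$ such that every prefix has at least as many $u$'s as $d$'s. The $i$-th letter $u$ (call it $u_i$) of a Dyck path $D$ is matched with the letter $d$ following it such that the factor $D_i$ strictly between them is itself a Dyck path (balanced); $\ell_D(i)$ denotes the length of $D_i$. For Dyck paths $D,E$ of length $2n$, $D\preceq_T E$ iff $\ell_D(i)\le \ell_E(i)$ for all $1\le i\le n$; this is the Tamari lattice of order $n$, and a pair $[D,E]$ with $D\preceq_T E$ is a Tamari interval. *)

theory Defs
  imports Main
begin

text \<open>Nodes are addressed by paths from the root: the root is [], and the k-th child
  (0-based) of the node with address p has address p @ [k].\<close>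

datatype ptree = PNode "ptree list"

fun pre :: "ptree \<Rightarrow> nat list list"
  and pre_children :: "nat \<Rightarrow> ptree list \<Rightarrow> nat list list" where
  "pre (PNode ts) = [] # pre_children 0 ts"
| "pre_children k [] = []"
| "pre_children k (s # ss) = map (Cons k) (pre s) @ pre_children (Suc k) ss"

definition nodes :: "ptree \<Rightarrow> nat list set" where
  "nodes t = set (pre t)"

definition depth :: "nat list \<Rightarrow> nat" where
  "depth p = length p"

definition subtree_nodes :: "ptree \<Rightarrow> nat list \<Rightarrow> nat list set" where
  "subtree_nodes t u = {v \<in> nodes t. \<exists>w. v = u @ w}"

definition precedes :: "ptree \<Rightarrow> nat list \<Rightarrow> nat list \<Rightarrow> bool" where
  "precedes t w v \<longleftrightarrow> (\<exists>i j. i < j \<and> j < length (pre t) \<and> pre t ! i = w \<and> pre t ! j = v)"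

definition sticky :: "ptree \<Rightarrow> (nat list \<Rightarrow> nat) \<Rightarrow> bool" where
  "sticky t l \<longleftrightarrow>
     (\<forall>u\<in>nodes t. l u \<le> depth u) \<and>
     (\<forall>u\<in>nodes t. depth u > 0 \<longrightarrow> (\<exists>v\<in>subtree_nodes t u. l v < depth u)) \<and>
     (\<forall>u\<in>nodes t. \<forall>v\<in>subtree_nodes t u. l v = depth u \<longrightarrow>
         (\<forall>w\<in>subtree_nodes t u. precedes t w v \<longrightarrow> l w \<ge> depth u))"

definition certificate :: "ptree \<Rightarrow> (nat list \<Rightarrow> nat) \<Rightarrow> nat list \<Rightarrow> nat list" where
  "certificate t l u = hd (filter (\<lambda>v. v \<in> subtree_nodes t u \<and> l v < depth u) (pre t))"

definition cert_count :: "ptree \<Rightarrow> (nat list \<Rightarrow> nat) \<Rightarrow> nat list \<Rightarrow> nat" where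
  "cert_count t l w = card {u \<in> nodes t. u \<noteq> [] \<and> certificate t l u = w}"

datatype step = U | D

fun contour :: "ptree \<Rightarrow> step list" where
  "contour (PNode ts) = concat (map (\<lambda>s. U # contour s @ [D]) ts)"

definition dword :: "ptree \<Rightarrow> (nat list \<Rightarrow> nat) \<Rightarrow> step list" where
  "dword t l = concat (map (\<lambda>v. U # replicate (cert_count t l v) D) (tl (pre t)))"

definition cnt :: "step \<Rightarrow> step list \<Rightarrow> nat" where
  "cnt a w = length (filter (\<lambda>x. x = a) w)"

definition dyck :: "nat \<Rightarrow> step list \<Rightarrow> bool" where
  "dyck n w \<longleftrightarrow> cnt U w = n \<and> cnt D w = n \<and>
     (\<forall>k \<le> length w. cnt D (take k w) \<le> cnt U (take k w))"

text \<open>Position (0-based) of the i-th letter u (i \<ge> 1).\<close>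
definition upos :: "step list \<Rightarrow> nat \<Rightarrow> nat" where
  "upos w i = filter (\<lambda>p. w ! p = U) [0..<length w] ! (i - 1)"

text \<open>ell_D(i): length of the factor strictly between u_i and its matching d,
  i.e. of the (first) factor following u_i that is a Dyck path and is followed by d.\<close>
definition ell :: "step list \<Rightarrow> nat \<Rightarrow> nat" where
  "ell w i = (LEAST m. upos w i + m + 1 < length w \<and> w ! (upos w i + m + 1) = D \<and>
                (\<exists>k. dyck k (take m (drop (upos w i + 1) w))))"

definition tamari_le :: "nat \<Rightarrow> step list \<Rightarrow> step list \<Rightarrow> bool" where
  "tamari_le n P Q \<longleftrightarrow> (\<forall>i\<in>{1..n}. ell P i \<le> ell Q i)"

end

theory Submission
  imports Defs
begin


fun sub :: "ptree \<Rightarrow> nat list \<Rightarrow> ptree" where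
  "sub t [] = t"
| "sub (PNode ts) (k # p) = sub (ts ! k) p"

definition wrap :: "ptree \<Rightarrow> step list" where "wrap s = U # contour s @ [D]"

lemma contour_PNode: "contour (PNode ts) = concat (map wrap ts)"
  by (simp add: wrap_def[abs_def])

lemma cnt_append[simp]: "cnt a (xs @ ys) = cnt a xs + cnt a ys" by (simp add: cnt_def)
lemma cnt_Nil[simp]: "cnt a [] = 0" by (simp add: cnt_def)
lemma cnt_Cons[simp]: "cnt a (x # xs) = (if x = a then 1 else 0) + cnt a xs" by (simp add: cnt_def)
lemma cnt_replicate[simp]: "cnt a (replicate k b) = (if a = b then k else 0)" by (simp add: cnt_def)
lemma cnt_concat: "cnt a (concat xss) = sum_list (map (cnt a) xss)"
  by (induction xss) auto
lemma cnt_UD: "cnt U w + cnt D w = length w"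
proof (induction w)
  case (Cons a w) then show ?case by (cases a) auto
qed simp

lemma set_pre_children:
  "set (pre_children k ts) = {(k + j) # q | j q. j < length ts \<and> q \<in> set (pre (ts ! j))}"
proof (induction ts arbitrary: k)
  case Nil
  then show ?case by simp
next
  case (Cons s ss)
  show ?case
  proof (rule set_eqI, rule iffI)
    fix x assume "x \<in> set (pre_children k (s # ss))"
    then show "x \<in> {(k + j) # q | j q. j < length (s # ss) \<and> q \<in> set (pre ((s # ss) ! j))}"
      using Cons.IH[of "Suc k"] by force
  next
    fix x assume "x \<in> {(k + j) # q | j q. j < length (s # ss) \<and> q \<in> set (pre ((s # ss) ! j))}"
    then obtain j q where x: "x = (k + j) # q" "j < Suc (length ss)" "q \<in> set (pre ((s # ss) ! j))" by auto
    show "x \<in> set (pre_children k (s # ss))"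
    proof (cases j)
      case 0 then show ?thesis using x by simp
    next
      case (Suc j') then show ?thesis using x Cons.IH[of "Suc k"] by auto
    qed
  qed
qed

lemma mem_pre_Cons[simp]:
  "(k # q \<in> set (pre (PNode ts))) = (k < length ts \<and> q \<in> set (pre (ts ! k)))"
  by (auto simp: set_pre_children)

lemma Nil_mem_pre[simp]: "[] \<in> set (pre t)"
  by (cases t) simp

lemma pre_nth0[simp]: "pre t ! 0 = []"
  by (cases t) simp

lemma pre_ne[simp]: "pre t \<noteq> []"
  by (cases t) simp

lemma distinct_pre_children:
  "(\<forall>s\<in>set ts. distinct (pre s)) \<Longrightarrow> distinct (pre_children k ts)"
proof (induction ts arbitrary: k)
  case Nil
  then show ?case by simp
next
  case (Cons s ss)
  have "distinct (map (Cons k) (pre s))" using Cons.prems by (simp add: distinct_map)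
  moreover have "distinct (pre_children (Suc k) ss)" using Cons by simp
  moreover have "set (map (Cons k) (pre s)) \<inter> set (pre_children (Suc k) ss) = {}"
    by (auto simp: set_pre_children)
  ultimately show ?case by simp
qed

lemma distinct_pre: "distinct (pre t)"
proof (induction t)
  case (PNode ts)
  then show ?case using distinct_pre_children[of ts 0] by (auto simp: set_pre_children)
qed

lemma len_pre_children: "length (pre_children k ts) = sum_list (map (\<lambda>s. length (pre s)) ts)"
  by (induction ts arbitrary: k) auto

lemma len_pre: "length (pre t) = Suc (cnt U (contour t)) \<and> cnt D (contour t) = cnt U (contour t)"
proof (induction t)
  case (PNode ts)
  have 1: "cnt a (concat (map wrap ts)) = sum_list (map (\<lambda>s. cnt a (wrap s)) ts)" for a
    by (simp add: cnt_concat o_def)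
  have s1: "sum_list (map (\<lambda>s. length (pre s)) ts) = sum_list (map (\<lambda>s. cnt U (wrap s)) ts)"
    by (rule arg_cong[where f=sum_list]) (use PNode in \<open>auto simp: wrap_def\<close>)
  have s2: "sum_list (map (\<lambda>s. cnt D (wrap s)) ts) = sum_list (map (\<lambda>s. cnt U (wrap s)) ts)"
    by (rule arg_cong[where f=sum_list]) (use PNode in \<open>auto simp: wrap_def\<close>)
  show ?case using s1 s2 1[of U] 1[of D] by (simp add: contour_PNode len_pre_children del: contour.simps)
qed

lemma len_pre_children': "length (pre_children k ts) = cnt U (concat (map wrap ts))"
  using len_pre by (simp add: len_pre_children cnt_concat o_def wrap_def)

definition bal :: "step list \<Rightarrow> bool" where
  "bal w \<longleftrightarrow> cnt U w = cnt D w \<and> (\<forall>k\<le>length w. cnt D (take k w) \<le> cnt U (take k w))"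

lemma dyck_bal: "dyck n w \<longleftrightarrow> bal w \<and> cnt U w = n"
  by (auto simp: dyck_def bal_def)

lemma bal_append: "bal a \<Longrightarrow> bal b \<Longrightarrow> bal (a @ b)"
  unfolding bal_def
proof (intro conjI allI impI)
  fix k assume a: "cnt U a = cnt D a \<and> (\<forall>k\<le>length a. cnt D (take k a) \<le> cnt U (take k a))"
    and b: "cnt U b = cnt D b \<and> (\<forall>k\<le>length b. cnt D (take k b) \<le> cnt U (take k b))"
    and k: "k \<le> length (a @ b)"
  show "cnt D (take k (a @ b)) \<le> cnt U (take k (a @ b))"
  proof (cases "k \<le> length a")
    case True then show ?thesis using a by simp
  next
    case False then show ?thesis using a b k by simp
  qed
qed auto

lemma bal_Nil: "bal []" by (simp add: bal_def)

lemma bal_concat: "\<forall>x\<in>set xs. bal x \<Longrightarrow> bal (concat xs)"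
  by (induction xs) (auto simp: bal_Nil bal_append)

lemma bal_wrap: "bal a \<Longrightarrow> bal (U # a @ [D])"
  unfolding bal_def
proof (intro conjI allI impI)
  fix k assume a: "cnt U a = cnt D a \<and> (\<forall>k\<le>length a. cnt D (take k a) \<le> cnt U (take k a))"
    and k: "k \<le> length (U # a @ [D])"
  show "cnt D (take k (U # a @ [D])) \<le> cnt U (take k (U # a @ [D]))"
  proof (cases k)
    case 0 then show ?thesis by simp
  next
    case (Suc k')
    show ?thesis
    proof (cases "k' \<le> length a")
      case True
      have "cnt D (take k' a) \<le> cnt U (take k' a)" using a True by blast
      then show ?thesis using Suc True by simp
    next
      case False then show ?thesis using a Suc k by simp
    qed
  qed
qed auto

lemma bal_contour: "bal (contour t)"
proof (induction t)
  case (PNode ts)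
  then show ?case by (auto simp: contour_PNode wrap_def intro!: bal_concat bal_wrap simp del: contour.simps)
qed

lemma pre_children_split:
  "k < length ts \<Longrightarrow> pre_children j ts = pre_children j (take k ts) @ map (Cons (j + k)) (pre (ts ! k)) @ pre_children (j + k + 1) (drop (k + 1) ts)"
proof (induction ts arbitrary: j k)
  case Nil then show ?case by simp
next
  case (Cons s ss)
  show ?case
  proof (cases k)
    case 0 then show ?thesis by simp
  next
    case (Suc k') then show ?thesis using Cons.IH[of k' "Suc j"] Cons.prems by simp
  qed
qed

lemma concat_wrap_split:
  "k < length ts \<Longrightarrow> concat (map wrap ts) = concat (map wrap (take k ts)) @ U # contour (ts ! k) @ D # concat (map wrap (drop (k + 1) ts))"
proof -
  assume "k < length ts"
  then have "ts = take k ts @ ts ! k # drop (Suc k) ts" by (simp add: id_take_nth_drop)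
  then have "concat (map wrap ts) = concat (map wrap (take k ts @ ts ! k # drop (Suc k) ts))" by simp
  then show ?thesis by (simp add: wrap_def)
qed

lemma sub_mem: "p \<in> set (pre t) \<Longrightarrow> (p @ w \<in> set (pre t)) = (w \<in> set (pre (sub t p)))"
proof (induction p arbitrary: t)
  case Nil then show ?case by simp
next
  case (Cons k p')
  obtain ts where t: "t = PNode ts" by (cases t)
  show ?case using Cons t by (simp del: pre.simps)
qed

lemma decomp:
  "p \<in> set (pre t) \<Longrightarrow> \<exists>xs ys. pre t = xs @ map ((@) p) (pre (sub t p)) @ ys \<and>
     (p \<noteq> [] \<longrightarrow> (\<exists>a b. contour t = a @ U # contour (sub t p) @ D # b \<and> cnt U a + 1 = length xs))"
proof (induction p arbitrary: t)
  case Nil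
  then show ?case by (rule_tac x="[]" in exI, rule_tac x="[]" in exI) simp
next
  case (Cons k p')
  obtain ts where t: "t = PNode ts" by (cases t)
  have k: "k < length ts" and p': "p' \<in> set (pre (ts ! k))" using Cons.prems t by (auto simp del: pre.simps)
  obtain xs' ys' where xs': "pre (ts ! k) = xs' @ map ((@) p') (pre (sub (ts ! k) p')) @ ys'"
    and c': "p' \<noteq> [] \<longrightarrow> (\<exists>a b. contour (ts ! k) = a @ U # contour (sub (ts ! k) p') @ D # b \<and> cnt U a + 1 = length xs')"
    using Cons.IH[OF p'] by blast
  define PC where "PC = pre_children 0 (take k ts)"
  define R where "R = pre_children (k + 1) (drop (k + 1) ts)"
  have pt: "pre t = [] # PC @ map (Cons k) (pre (ts ! k)) @ R"
    using pre_children_split[OF k, of 0] by (simp add: t PC_def R_def)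
  have subt: "sub t (k # p') = sub (ts ! k) p'" by (simp add: t)
  define xs where "xs = [] # PC @ map (Cons k) xs'"
  have A: "pre t = xs @ map ((@) (k # p')) (pre (sub t (k # p'))) @ map (Cons k) ys' @ R"
    unfolding pt subt xs_def by (subst xs') simp
  define A where "A = concat (map wrap (take k ts))"
  define B where "B = concat (map wrap (drop (k + 1) ts))"
  have ct: "contour t = A @ U # contour (ts ! k) @ D # B"
    using concat_wrap_split[OF k] by (simp add: t contour_PNode A_def B_def del: contour.simps)
  have lenPC: "length PC = cnt U A" unfolding PC_def A_def by (rule len_pre_children')
  have "\<exists>a b. contour t = a @ U # contour (sub t (k # p')) @ D # b \<and> cnt U a + 1 = length xs"
  proof (cases "p' = []")
    case True
    then have "xs' = []" using xs' by (metis append_eq_append_conv append_self_conv2 length_append length_map sub.simps(1) add_0 add.commute le_add1 le_antisym length_0_conv)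
    then show ?thesis using True ct lenPC subt by (auto simp: xs_def)
  next
    case False
    then obtain a' b' where a': "contour (ts ! k) = a' @ U # contour (sub (ts ! k) p') @ D # b'"
      "cnt U a' + 1 = length xs'" using c' by blast
    show ?thesis
      by (rule exI[of _ "A @ U # a'"], rule exI[of _ "b' @ D # B"])
         (use a' ct lenPC in \<open>simp add: xs_def subt\<close>)
  qed
  then show ?case using A by blast
qed



lemma len_filter_nth: "length (filter (\<lambda>q. a ! q = U) [0..<length a]) = cnt U a"
proof -
  have "length (filter (\<lambda>q. a ! q = U) [0..<length a]) = length (filter (\<lambda>x. x = U) (map (nth a) [0..<length a]))"
    by (simp add: filter_map o_def)
  also have "map (nth a) [0..<length a] = a" by (rule map_nth)
  finally show ?thesis by (simp add: cnt_def)
qed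

lemma upos_app: assumes "cnt U a + 1 = i" shows "upos (a @ U # b) i = length a"
proof -
  let ?w = "a @ U # b"
  have sp: "[0..<length ?w] = [0..<length a] @ length a # [Suc (length a)..<length ?w]"
    using upt_add_eq_append[of 0 "length a" "Suc (length b)"] upt_conv_Cons[of "length a" "length a + Suc (length b)"] by simp
  have f1: "filter (\<lambda>q. ?w ! q = U) [0..<length a] = filter (\<lambda>q. a ! q = U) [0..<length a]"
    by (rule filter_cong) (auto simp: nth_append)
  have eq: "filter (\<lambda>q. ?w ! q = U) [0..<length ?w] = filter (\<lambda>q. a ! q = U) [0..<length a] @ length a # filter (\<lambda>q. ?w ! q = U) [Suc (length a)..<length ?w]"
    by (subst sp) (simp add: f1)
  have i1: "i - 1 = length (filter (\<lambda>q. a ! q = U) [0..<length a])" using assms len_filter_nth[of a] by simp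
  show ?thesis unfolding upos_def eq i1 by (rule nth_append_length)
qed

lemma take_Suc_nth: "m < length x \<Longrightarrow> take (Suc m) x = take m x @ [x ! m]"
  by (simp add: take_Suc_conv_app_nth)

lemma ell_unique:
  assumes m1': "p + m1 + 1 < length w" "w ! (p+m1+1) = D" "bal (take m1 (drop (p+1) w))"
    and m2': "p + m2 + 1 < length w" "bal (take m2 (drop (p+1) w))"
    and lt: "m1 < m2"
  shows False
proof -
  let ?x = "drop (p+1) w"
  have m1: "m1 < length ?x" "w ! (p+m1+1) = D" "bal (take m1 ?x)" using m1' by auto
  have m2: "m2 < length ?x" "bal (take m2 ?x)" using m2' by auto
  have x: "?x ! m1 = D" using m1 by (simp add: add.commute add.left_commute)
  have t: "take (Suc m1) ?x = take m1 ?x @ [D]" using take_Suc_nth[OF m1(1)] x by simp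
  have "take (Suc m1) (take m2 ?x) = take (Suc m1) ?x" using lt by (simp add: min_def)
  moreover have "Suc m1 \<le> length (take m2 ?x)" using lt m2 by simp
  moreover from m2(2) have H: "\<forall>k\<le>length (take m2 ?x). cnt D (take k (take m2 ?x)) \<le> cnt U (take k (take m2 ?x))"
    unfolding bal_def by blast
  ultimately have "cnt D (take (Suc m1) ?x) \<le> cnt U (take (Suc m1) ?x)"
    by (metis (no_types))
  then show False using t m1(3) by (simp add: bal_def)
qed

lemma ell_eq:
  assumes "upos w i = p" "p + m + 1 < length w" "w ! (p+m+1) = D" "bal (take m (drop (p+1) w))"
  shows "ell w i = m"
proof -
  let ?C = "\<lambda>m. upos w i + m + 1 < length w \<and> w ! (upos w i + m + 1) = D \<and>
                (\<exists>k. dyck k (take m (drop (upos w i + 1) w)))"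
  have C: "?C m" unfolding assms(1) using assms(2-4) by (simp add: dyck_bal)
  have uniq: "m' = m" if "?C m'" for m'
  proof -
    have b: "bal (take m' (drop (p+1) w))" using that unfolding assms(1) dyck_bal by blast
    have c1: "p + m' + 1 < length w" "w ! (p + m' + 1) = D" using that unfolding assms(1) by blast+
    show ?thesis
    proof (rule ccontr)
      assume "m' \<noteq> m"
      then consider "m' < m" | "m < m'" by linarith
      then show False
      proof cases
        case 1 show False
          by (rule ell_unique[OF c1(1) c1(2) b assms(2) assms(4) 1])
      next
        case 2 show False
          by (rule ell_unique[OF assms(2) assms(3) assms(4) c1(1) b 2])
      qed
    qed
  qed
  show ?thesis unfolding ell_def
  proof (rule Least_equality[where P="?C", OF C])
    fix y assume "?C y"
    then have "y = m" by (rule uniq)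
    then show "m \<le> y" by simp
  qed
qed

lemma ell_le:
  assumes up: "upos w i = p" and T: "T \<le> length (drop (p+1) w)"
    and neg: "cnt U (take T (drop (p+1) w)) < cnt D (take T (drop (p+1) w))"
  shows "ell w i \<le> 2 * cnt U (take T (drop (p+1) w))"
proof -
  let ?x = "drop (p+1) w"
  define P where "P = (\<lambda>t. cnt U (take t ?x) < cnt D (take t ?x))"
  define t0 where "t0 = (LEAST t. P t)"
  have Pt0: "P t0" unfolding t0_def using neg by (intro LeastI[of P T]) (simp add: P_def)
  have t0T: "t0 \<le> T" unfolding t0_def using neg by (intro Least_le) (simp add: P_def)
  have t0pos: "t0 \<noteq> 0" using Pt0 by (cases t0) (auto simp: P_def)
  then obtain m where m: "t0 = Suc m" by (cases t0) auto
  have before: "\<not> P t" if "t < t0" for t using that unfolding t0_def by (rule not_less_Least)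
  have mlen: "m < length ?x" using t0T T m by simp
  have tk: "take t0 ?x = take m ?x @ [?x ! m]" using take_Suc_nth[OF mlen] m by simp
  have nm: "cnt D (take m ?x) \<le> cnt U (take m ?x)" using before[of m] m by (simp add: P_def)
  have xm: "?x ! m = D"
  proof (rule ccontr)
    assume "?x ! m \<noteq> D"
    then have "?x ! m = U" by (cases "?x ! m") auto
    then show False using Pt0 tk nm by (simp add: P_def)
  qed
  have eqm: "cnt D (take m ?x) = cnt U (take m ?x)" using Pt0 tk nm xm by (simp add: P_def)
  have balm: "bal (take m ?x)"
    unfolding bal_def
  proof (intro conjI allI impI)
    show "cnt U (take m ?x) = cnt D (take m ?x)" using eqm by simp
  next
    fix j assume "j \<le> length (take m ?x)"
    then have jm: "j \<le> m" by simp
    then have "take j (take m ?x) = take j ?x" "j < t0" using m by (auto simp: min_def)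
    then show "cnt D (take j (take m ?x)) \<le> cnt U (take j (take m ?x))"
      using before[of j] by (simp add: P_def)
  qed
  have "p + m + 1 < length w" using mlen by simp
  moreover have "w ! (p + m + 1) = D" using xm mlen by (simp add: add.commute add.left_commute)
  ultimately have "ell w i = m" using ell_eq[OF up _ _ balm] by simp
  moreover have "m = 2 * cnt U (take m ?x)" using cnt_UD[of "take m ?x"] eqm mlen by simp
  moreover have "cnt U (take m ?x) \<le> cnt U (take T ?x)"
  proof -
    have mT: "m \<le> T" using t0T m by simp
    have "cnt U (take T ?x) = cnt U (take m (take T ?x)) + cnt U (drop m (take T ?x))"
      by (simp only: cnt_append[symmetric] append_take_drop_id)
    also have "take m (take T ?x) = take m ?x" using mT by (simp add: min_def)
    finally show ?thesis by simp
  qed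
  ultimately show ?thesis by linarith
qed



definition g :: "(nat \<Rightarrow> nat) \<Rightarrow> nat \<Rightarrow> nat \<Rightarrow> nat" where
  "g c n j = card {k\<in>{1..n}. c k = j}"

definition blk :: "(nat \<Rightarrow> nat) \<Rightarrow> nat \<Rightarrow> nat \<Rightarrow> step list" where
  "blk c n j = U # replicate (g c n j) D"

lemma cntU_W: "cnt U (concat (map (blk c n) js)) = length js"
  by (induction js) (auto simp: blk_def)

lemma cntD_W: "cnt D (concat (map (blk c n) js)) = sum_list (map (g c n) js)"
  by (induction js) (auto simp: blk_def)

lemma fiber: assumes "finite J" shows "sum (g c n) J = card {k\<in>{1..n}. c k \<in> J}"
proof -
  have "{k\<in>{1..n}. c k \<in> J} = (\<Union>j\<in>J. {k\<in>{1..n}. c k = j})" by auto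
  moreover have "card (\<Union>j\<in>J. {k\<in>{1..n}. c k = j}) = (\<Sum>j\<in>J. card {k\<in>{1..n}. c k = j})"
    using assms by (intro card_UN_disjoint) auto
  ultimately show ?thesis by (simp add: g_def)
qed

lemma sum_upt: "sum_list (map (g c n) [a..<b]) = card {k\<in>{1..n}. c k \<in> {a..<b}}"
  using fiber[of "{a..<b}" c n] interv_sum_list_conv_sum_set_nat[of "g c n" a b] by simp

lemma dyck_W:
  assumes ck: "\<forall>k\<in>{1..n}. k \<le> c k \<and> c k \<le> n"
  shows "dyck n (concat (map (blk c n) [1..<n+1]))"
proof -
  let ?W = "\<lambda>m. concat (map (blk c n) [1..<Suc m])"
  have pref: "m \<le> n \<Longrightarrow> \<forall>r\<le>length (?W m). cnt D (take r (?W m)) \<le> cnt U (take r (?W m))" for m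
  proof (induction m)
    case 0 then show ?case by simp
  next
    case (Suc m)
    have W: "?W (Suc m) = ?W m @ blk c n (Suc m)" by simp
    show ?case
    proof (intro allI impI)
      fix r assume r: "r \<le> length (?W (Suc m))"
      show "cnt D (take r (?W (Suc m))) \<le> cnt U (take r (?W (Suc m)))"
      proof (cases "r \<le> length (?W m)")
        case True
        then show ?thesis using Suc by (simp add: W)
      next
        case False
        then obtain s where s: "r - length (?W m) = Suc s" by (cases "r - length (?W m)") auto
        have tk: "take r (?W (Suc m)) = ?W m @ U # take s (replicate (g c n (Suc m)) D)"
          using False s by (simp add: W blk_def)
        have cu: "cnt U (take r (?W (Suc m))) = Suc m" using tk cntU_W[of c n "[1..<Suc m]"] by simp
        have "cnt D (take r (?W (Suc m))) \<le> cnt D (?W m) + g c n (Suc m)" using tk by simp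
        also have "\<dots> = card {k\<in>{1..n}. c k \<in> {1..<Suc (Suc m)}}"
          using cntD_W[of c n "[1..<Suc m]"] sum_upt[of c n 1 "Suc (Suc m)"] by simp
        also have "\<dots> \<le> card {1..Suc m}"
        proof (rule card_mono)
          show "{k\<in>{1..n}. c k \<in> {1..<Suc (Suc m)}} \<subseteq> {1..Suc m}"
          proof
            fix x assume x: "x \<in> {k\<in>{1..n}. c k \<in> {1..<Suc (Suc m)}}"
            then have "x \<le> c x" using ck by blast
            then show "x \<in> {1..Suc m}" using x by auto
          qed
        qed simp
        finally show ?thesis using cu by simp
      qed
    qed
  qed
  have "cnt D (?W n) = card {k\<in>{1..n}. c k \<in> {1..<Suc n}}"
    using cntD_W[of c n "[1..<Suc n]"] sum_upt[of c n 1 "Suc n"] by simp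
  also have "{k\<in>{1..n}. c k \<in> {1..<Suc n}} = {1..n}" using ck by fastforce
  finally have "cnt D (?W n) = n" by simp
  then show ?thesis using pref[of n] cntU_W[of c n "[1..<Suc n]"] by (simp add: dyck_def)
qed

lemma tam_W:
  assumes ck: "\<forall>k\<in>{1..n}. k \<le> c k \<and> c k \<le> n"
    and i: "1 \<le> i" "i \<le> e" "e \<le> n" and ce: "\<forall>k\<in>{i..e}. c k \<le> e"
  shows "ell (concat (map (blk c n) [1..<n+1])) i \<le> 2 * (e - i)"
proof -
  have sp: "[1..<n+1] = [1..<i] @ [i] @ [Suc i..<Suc e] @ [Suc e..<n+1]"
  proof -
    have "[1..<n+1] = [1..<i] @ [i..<n+1]" using i by (metis upt_add_eq_append le_add_diff_inverse le_trans le_add2 add.commute)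
    moreover have "[i..<n+1] = [i..<Suc e] @ [Suc e..<n+1]" using i by (metis upt_add_eq_append le_add_diff_inverse Suc_le_mono add.commute le_SucI le_refl Suc_eq_plus1)
    moreover have "[i..<Suc e] = [i] @ [Suc i..<Suc e]" using i by (simp add: upt_conv_Cons)
    ultimately show ?thesis by simp
  qed
  define A where "A = concat (map (blk c n) [1..<i])"
  define Z where "Z = concat (map (blk c n) [Suc i..<Suc e])"
  define R where "R = concat (map (blk c n) [Suc e..<n+1])"
  have W: "concat (map (blk c n) [1..<n+1]) = A @ U # (replicate (g c n i) D @ Z @ R)"
    unfolding A_def Z_def R_def by (subst sp) (simp add: blk_def)
  have cA: "cnt U A + 1 = i" using cntU_W[of c n "[1..<i]"] i by (simp add: A_def)
  have up: "upos (concat (map (blk c n) [1..<n+1])) i = length A" unfolding W by (rule upos_app[OF cA])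
  have dr: "drop (length A + 1) (concat (map (blk c n) [1..<n+1])) = replicate (g c n i) D @ Z @ R"
    unfolding W by simp
  define T where "T = g c n i + length Z"
  have tk: "take T (replicate (g c n i) D @ Z @ R) = replicate (g c n i) D @ Z" by (simp add: T_def)
  have cU: "cnt U (replicate (g c n i) D @ Z) = e - i" using cntU_W[of c n "[Suc i..<Suc e]"] i by (simp add: Z_def del: upt_Suc)
  have "cnt D (replicate (g c n i) D @ Z) = g c n i + sum_list (map (g c n) [Suc i..<Suc e])"
    using cntD_W[of c n "[Suc i..<Suc e]"] by (simp add: Z_def)
  also have "\<dots> = sum_list (map (g c n) [i..<Suc e])" using i by (simp add: upt_conv_Cons del: upt_Suc)
  also have "\<dots> = card {k\<in>{1..n}. c k \<in> {i..<Suc e}}" by (rule sum_upt)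
  also have "card {k\<in>{1..n}. c k \<in> {i..<Suc e}} \<ge> card {i..e}"
  proof (rule card_mono)
    show "{i..e} \<subseteq> {k\<in>{1..n}. c k \<in> {i..<Suc e}}"
    proof
      fix x assume x: "x \<in> {i..e}"
      then have x1: "x \<in> {1..n}" using i by auto
      then have "x \<le> c x" using ck by blast
      moreover have "c x \<le> e" using ce x by blast
      ultimately show "x \<in> {k\<in>{1..n}. c k \<in> {i..<Suc e}}" using x x1 by auto
    qed
  qed simp
  finally have cD: "cnt D (replicate (g c n i) D @ Z) \<ge> e - i + 1" using i by simp
  have "ell (concat (map (blk c n) [1..<n+1])) i \<le> 2 * cnt U (take T (drop (length A + 1) (concat (map (blk c n) [1..<n+1]))))"
    by (rule ell_le[OF up]) (use dr tk cU cD in \<open>simp_all add: T_def\<close>)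
  then show ?thesis using dr tk cU by simp
qed



lemma nodes_pre: "nodes t = set (pre t)" by (simp add: nodes_def)

lemma idx:
  assumes i: "i < length (pre S)"
  shows "i + length (pre (sub S (pre S ! i))) \<le> length (pre S)
    \<and> (\<forall>j<length (pre S). pre S ! j \<in> subtree_nodes S (pre S ! i) \<longleftrightarrow> i \<le> j \<and> j < i + length (pre (sub S (pre S ! i))))
    \<and> (i \<noteq> 0 \<longrightarrow> ell (contour S) i = 2 * (length (pre (sub S (pre S ! i))) - 1))"
proof -
  let ?P = "pre S"
  define p where "p = ?P ! i"
  define L where "L = pre (sub S p)"
  have dist: "distinct ?P" by (rule distinct_pre)
  have pin: "p \<in> set ?P" using i by (simp add: p_def)
  obtain xs ys where dec: "?P = xs @ map ((@) p) L @ ys"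
    and con: "p \<noteq> [] \<longrightarrow> (\<exists>a b. contour S = a @ U # contour (sub S p) @ D # b \<and> cnt U a + 1 = length xs)"
    using decomp[OF pin] unfolding L_def by blast
  have Lne: "L \<noteq> []" and L0: "L ! 0 = []" by (simp_all add: L_def)
  have "?P ! length xs = p" using Lne L0 by (simp add: dec nth_append)
  moreover have "length xs < length ?P" using Lne by (subst dec) simp
  ultimately have lx: "length xs = i" using dist i nth_eq_iff_index_eq[OF dist, of "length xs" i] by (simp add: p_def)
  have len: "length ?P = i + length L + length ys" using dec lx by simp
  have mid: "?P ! (i + q) = p @ L ! q" if "q < length L" for q
    using that dec lx by (simp add: nth_append)
  have part2: "\<forall>j<length ?P. ?P ! j \<in> subtree_nodes S p \<longleftrightarrow> i \<le> j \<and> j < i + length L"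
  proof (intro allI impI iffI)
    fix j assume j: "j < length ?P" and sj: "?P ! j \<in> subtree_nodes S p"
    then obtain w where w: "?P ! j = p @ w" unfolding subtree_nodes_def by blast
    have "p @ w \<in> set ?P" using w j by (metis nth_mem)
    then have "w \<in> set L" using sub_mem[OF pin] by (simp add: L_def)
    then obtain q where q: "q < length L" "w = L ! q" by (metis in_set_conv_nth)
    have "?P ! j = ?P ! (i + q)" using mid[OF q(1)] w q by simp
    then have "j = i + q" using dist j len q by (simp add: nth_eq_iff_index_eq)
    then show "i \<le> j \<and> j < i + length L" using q by simp
  next
    fix j assume j: "j < length ?P" and r: "i \<le> j \<and> j < i + length L"
    then have ji: "j - i < length L" by linarith
    have "?P ! j = p @ L ! (j - i)" using mid[OF ji] r by simp
    moreover have "?P ! j \<in> set ?P" using j by (rule nth_mem)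
    ultimately show "?P ! j \<in> subtree_nodes S p" unfolding subtree_nodes_def nodes_pre by auto
  qed
  have part3: "i \<noteq> 0 \<longrightarrow> ell (contour S) i = 2 * (length L - 1)"
  proof
    assume i0: "i \<noteq> 0"
    have "p \<noteq> []"
    proof
      assume "p = []"
      then have pe: "?P ! i = ?P ! 0" by (simp add: p_def)
      have e: "(?P ! i = ?P ! 0) = (i = 0)" by (rule nth_eq_iff_index_eq[OF dist i]) (use i in simp)
      show False using pe e i0 by blast
    qed
    then obtain a b where ab: "contour S = a @ U # contour (sub S p) @ D # b" "cnt U a + 1 = i"
      using con lx by auto
    have up: "upos (contour S) i = length a" unfolding ab(1) by (rule upos_app[OF ab(2)])
    have "ell (contour S) i = length (contour (sub S p))"
      by (rule ell_eq[OF up]) (simp_all add: ab(1) bal_contour nth_append)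
    also have "\<dots> = 2 * (length L - 1)"
      using len_pre[of "sub S p"] cnt_UD[of "contour (sub S p)"] by (simp add: L_def)
    finally show "ell (contour S) i = 2 * (length L - 1)" .
  qed
  show ?thesis using len part2 part3 by (simp add: p_def[symmetric] L_def[symmetric])
qed



theorem proposition4p1:
  fixes S :: ptree and l :: "nat list \<Rightarrow> nat" and n :: nat
  assumes "sticky S l" and "card (nodes S) = n + 1" and "n \<ge> 1"
  shows "dyck n (dword S l) \<and> dyck n (contour S) \<and> tamari_le n (dword S l) (contour S)"
proof -
  let ?P = "pre S"
  define sz where "sz i = length (pre (sub S (?P ! i)))" for i
  have dist: "distinct ?P" by (rule distinct_pre)
  have N: "length ?P = n + 1" using assms(2) distinct_card[OF dist] by (simp add: nodes_pre)
  have idx': "i + sz i \<le> n + 1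
    \<and> (\<forall>j<n+1. ?P ! j \<in> subtree_nodes S (?P ! i) \<longleftrightarrow> i \<le> j \<and> j < i + sz i)
    \<and> (i \<noteq> 0 \<longrightarrow> ell (contour S) i = 2 * (sz i - 1))" if "i < n + 1" for i
    using idx[of i S] that N unfolding sz_def by simp
  have szpos: "sz i \<ge> 1" for i unfolding sz_def by (simp add: Suc_le_eq)
  have nz: "?P ! k \<noteq> []" if "k \<in> {1..n}" for k
  proof
    assume "?P ! k = []"
    then have pe: "?P ! k = ?P ! 0" by simp
    have "(?P ! k = ?P ! 0) = (k = 0)" by (rule nth_eq_iff_index_eq[OF dist]) (use that N in auto)
    then show False using pe that by auto
  qed
  have sticky2: "\<forall>u\<in>nodes S. depth u > 0 \<longrightarrow> (\<exists>v\<in>subtree_nodes S u. l v < depth u)"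
    using assms(1) unfolding sticky_def by blast
  have cex: "\<exists>j. j < n + 1 \<and> ?P ! j = certificate S l (?P ! k) \<and> k \<le> j \<and> j < k + sz k" if k: "k \<in> {1..n}" for k
  proof -
    let ?Q = "\<lambda>v. v \<in> subtree_nodes S (?P ! k) \<and> l v < depth (?P ! k)"
    have kN: "k < n + 1" using k by simp
    have "?P ! k \<in> nodes S" using kN N by (simp add: nodes_pre)
    moreover have "depth (?P ! k) > 0" using nz[OF k] by (simp add: depth_def)
    ultimately obtain v where v: "?Q v" using sticky2 by blast
    have "v \<in> set ?P" using v unfolding subtree_nodes_def nodes_pre by blast
    then have "filter ?Q ?P \<noteq> []" using v by (simp add: filter_empty_conv) blast
    then have "hd (filter ?Q ?P) \<in> set (filter ?Q ?P)" by (rule hd_in_set)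
    then have cq: "?Q (certificate S l (?P ! k))" "certificate S l (?P ! k) \<in> set ?P"
      unfolding certificate_def by auto
    then obtain j where j: "j < length ?P" "?P ! j = certificate S l (?P ! k)" by (metis in_set_conv_nth)
    then have "k \<le> j \<and> j < k + sz k" using idx'[OF kN] cq(1) N by auto
    then show ?thesis using j N by auto
  qed
  then obtain c where c: "\<forall>k\<in>{1..n}. c k < n + 1 \<and> ?P ! (c k) = certificate S l (?P ! k) \<and> k \<le> c k \<and> c k < k + sz k"
    by metis
  have ck: "\<forall>k\<in>{1..n}. k \<le> c k \<and> c k \<le> n" using c by fastforce
  have cc: "cert_count S l (?P ! j) = g c n j" if j: "j < n + 1" for j
  proof -
    have "{u \<in> nodes S. u \<noteq> [] \<and> certificate S l u = ?P ! j} = (nth ?P) ` {k\<in>{1..n}. c k = j}"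
    proof (rule set_eqI, rule iffI)
      fix u assume u: "u \<in> {u \<in> nodes S. u \<noteq> [] \<and> certificate S l u = ?P ! j}"
      then obtain k where k: "k < n + 1" "u = ?P ! k" using N by (auto simp: nodes_pre in_set_conv_nth)
      have k0: "k \<noteq> 0"
      proof
        assume "k = 0" then have "u = []" using k by simp
        then show False using u by simp
      qed
      then have k1: "k \<in> {1..n}" using k by auto
      have "?P ! (c k) = ?P ! j" using c k1 u k by auto
      then have "c k = j" using nth_eq_iff_index_eq[OF dist, of "c k" j] c k1 j N by auto
      then show "u \<in> (nth ?P) ` {k\<in>{1..n}. c k = j}" using k k1 by auto
    next
      fix u assume "u \<in> (nth ?P) ` {k\<in>{1..n}. c k = j}"
      then obtain k where k: "k \<in> {1..n}" "c k = j" "u = ?P ! k" by auto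
      then show "u \<in> {u \<in> nodes S. u \<noteq> [] \<and> certificate S l u = ?P ! j}"
        using c nz[OF k(1)] N by (auto simp: nodes_pre)
    qed
    moreover have "inj_on (nth ?P) {k\<in>{1..n}. c k = j}" using dist N by (intro inj_on_nth) auto
    ultimately show ?thesis unfolding cert_count_def g_def by (simp add: card_image)
  qed
  have tlP: "tl ?P = map (nth ?P) [1..<n+1]"
  proof -
    have "?P = map (nth ?P) [0..<n+1]" using N map_nth[of ?P] by simp
    then have "tl ?P = tl (map (nth ?P) [0..<n+1])" by simp
    also have "\<dots> = map (nth ?P) [1..<n+1]" by (simp add: upt_conv_Cons del: upt_Suc)
    finally show ?thesis .
  qed
  have dw: "dword S l = concat (map (blk c n) [1..<n+1])"
    unfolding dword_def tlP map_map
    by (rule arg_cong[where f=concat], rule map_cong) (auto simp: cc blk_def)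
  have d1: "dyck n (dword S l)" unfolding dw by (rule dyck_W[OF ck])
  have d2: "dyck n (contour S)" using bal_contour[of S] len_pre[of S] N by (simp add: dyck_bal)
  have t: "tamari_le n (dword S l) (contour S)"
    unfolding tamari_le_def
  proof
    fix i assume i: "i \<in> {1..n}"
    define e where "e = i + sz i - 1"
    have iN: "i < n + 1" using i by simp
    note Ii = idx'[OF iN]
    have e1: "i \<le> e" "e \<le> n" using Ii szpos[of i] by (auto simp: e_def)
    have ce: "\<forall>k\<in>{i..e}. c k \<le> e"
    proof
      fix k assume k: "k \<in> {i..e}"
      then have k1: "k \<in> {1..n}" using i e1 by auto
      have kN: "k < n + 1" using k1 by simp
      have "?P ! k \<in> subtree_nodes S (?P ! i)" using Ii kN k szpos[of i] by (auto simp: e_def)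
      then obtain w1 where w1: "?P ! k = ?P ! i @ w1" unfolding subtree_nodes_def by blast
      have ckk: "c k < n + 1" "k \<le> c k" "c k < k + sz k" using c k1 by auto
      have "?P ! (c k) \<in> subtree_nodes S (?P ! k)" using idx'[OF kN] ckk by blast
      then obtain w2 where w2: "?P ! (c k) = ?P ! k @ w2" "?P ! (c k) \<in> nodes S" unfolding subtree_nodes_def by blast
      have "?P ! (c k) \<in> subtree_nodes S (?P ! i)" using w1 w2 unfolding subtree_nodes_def by auto
      then have "c k < i + sz i" using Ii ckk(1) by blast
      then show "c k \<le> e" unfolding e_def by simp
    qed
    have "ell (dword S l) i \<le> 2 * (e - i)" unfolding dw
      by (rule tam_W[OF ck]) (use i e1 ce in auto)
    also have "2 * (e - i) = ell (contour S) i" using Ii i by (simp add: e_def)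
    finally show "ell (dword S l) i \<le> ell (contour S) i" .
  qed
  show ?thesis using d1 d2 t by simp
qed

end
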